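(* Let $G$ be a simple connected graph with $n$ vertices and $m$ edges, with maximum degree $\Delta$. Let $k=\left\lceil \frac{2m-n+1}{\Delta}\right\rceil$. Then $\rho_{ABC}(G)\le \sqrt{\Delta+k-2}$.
   Context: For a simple connected graph $G$ with vertex set $\{v_1,\dots,v_n\}$ and degrees $d_i$, the ABC matrix is $M(G)=(m_{ij})_{n\times n}$ with $m_{ij}=\sqrt{(d_i+d_j-2)/(d_id_j)}$ if $v_iv_j$ is an edge and $m_{ij}=0$ otherwise. The ABC spectral radius $\rho_{ABC}(G)$ is the largest eigenvalue of $M(G)$. *)

theory Defs
  imports Complex_Main
begin

definition simple_graph :: "'a set \<Rightarrow> ('a \<Rightarrow> 'a \<Rightarrow> bool) \<Rightarrow> bool" where
  "simple_graph V E \<longleftrightarrow> finite V \<and> V \<noteq> {} \<and>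
     (\<forall>u v. E u v \<longrightarrow> u \<in> V \<and> v \<in> V) \<and>
     (\<forall>u v. E u v \<longrightarrow> E v u) \<and> (\<forall>u. \<not> E u u)"

definition connected_graph :: "'a set \<Rightarrow> ('a \<Rightarrow> 'a \<Rightarrow> bool) \<Rightarrow> bool" where
  "connected_graph V E \<longleftrightarrow> (\<forall>u\<in>V. \<forall>v\<in>V. E\<^sup>*\<^sup>* u v)"

definition degree :: "'a set \<Rightarrow> ('a \<Rightarrow> 'a \<Rightarrow> bool) \<Rightarrow> 'a \<Rightarrow> nat" where
  "degree V E v = card {u \<in> V. E v u}"

definition num_edges :: "('a \<Rightarrow> 'a \<Rightarrow> bool) \<Rightarrow> nat" where
  "num_edges E = card {{u, v} | u v. E u v}"

definition max_degree :: "'a set \<Rightarrow> ('a \<Rightarrow> 'a \<Rightarrow> bool) \<Rightarrow> nat" where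
  "max_degree V E = Max (degree V E ` V)"

definition abc_matrix :: "'a set \<Rightarrow> ('a \<Rightarrow> 'a \<Rightarrow> bool) \<Rightarrow> 'a \<Rightarrow> 'a \<Rightarrow> real" where
  "abc_matrix V E u v =
     (if E u v then sqrt ((real (degree V E u) + real (degree V E v) - 2) /
                          (real (degree V E u) * real (degree V E v)))
      else 0)"

definition is_eigenvalue :: "'a set \<Rightarrow> ('a \<Rightarrow> 'a \<Rightarrow> real) \<Rightarrow> real \<Rightarrow> bool" where
  "is_eigenvalue V M mu \<longleftrightarrow>
     (\<exists>x :: 'a \<Rightarrow> real. (\<exists>v\<in>V. x v \<noteq> 0) \<and>
        (\<forall>u\<in>V. (\<Sum>w\<in>V. M u w * x w) = mu * x u))"

definition abc_spectral_radius :: "'a set \<Rightarrow> ('a \<Rightarrow> 'a \<Rightarrow> bool) \<Rightarrow> real" where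
  "abc_spectral_radius V E = Max {mu. is_eigenvalue V (abc_matrix V E) mu}"

end

theory Submission
  imports Defs "HOL-Analysis.Function_Topology" "HOL-Library.Function_Algebras"
begin

lemma fun_sum_apply: "(sum g T) v = (\<Sum>f\<in>T. g f v)" for g :: "'b \<Rightarrow> 'a \<Rightarrow> real"
  by (induction T rule: infinite_finite_induct) auto

lemma sym_swap:
  fixes M :: "'a \<Rightarrow> 'a \<Rightarrow> real"
  assumes fin: "finite V" and sym: "\<forall>u\<in>V. \<forall>w\<in>V. M u w = M w u"
  shows "(\<Sum>u\<in>V. x u * (\<Sum>w\<in>V. M u w * y w)) = (\<Sum>u\<in>V. y u * (\<Sum>w\<in>V. M u w * x w))"
proof -
  have "(\<Sum>u\<in>V. x u * (\<Sum>w\<in>V. M u w * y w)) = (\<Sum>u\<in>V. \<Sum>w\<in>V. x u * M u w * y w)"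
    by (simp add: sum_distrib_left mult.assoc)
  also have "\<dots> = (\<Sum>w\<in>V. \<Sum>u\<in>V. x u * M u w * y w)" by (rule sum.swap)
  also have "\<dots> = (\<Sum>w\<in>V. \<Sum>u\<in>V. y w * M w u * x u)"
    using sym by (intro sum.cong refl) (auto simp: mult_ac)
  also have "\<dots> = (\<Sum>u\<in>V. y u * (\<Sum>w\<in>V. M u w * x w))"
    by (simp add: sum_distrib_left mult.assoc)
  finally show ?thesis .
qed

lemma eig_finite:
  fixes M :: "'a \<Rightarrow> 'a \<Rightarrow> real"
  assumes fin: "finite V" and sym: "\<forall>u\<in>V. \<forall>w\<in>V. M u w = M w u"
  shows "finite {mu. is_eigenvalue V M mu}"
proof -
  define S where "S = {mu. is_eigenvalue V M mu}"
  define P where "P = (\<lambda>mu x. (\<exists>v\<in>V. x v \<noteq> 0) \<and> (\<forall>u\<in>V. (\<Sum>w\<in>V. M u w * x w) = mu * x u))"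
  define ev where "ev = (\<lambda>mu. (\<lambda>v. if v \<in> V then (SOME x. P mu x) v else 0))"
  have evP: "P mu (ev mu)" if "mu \<in> S" for mu
  proof -
    have "\<exists>x. P mu x" using that unfolding S_def P_def is_eigenvalue_def by blast
    then have "P mu (SOME x. P mu x)" by (rule someI_ex)
    then show ?thesis unfolding P_def ev_def by auto
  qed
  have ev0: "ev mu v = 0" if "v \<notin> V" for mu v using that unfolding ev_def by auto
  define ip where "ip = (\<lambda>f g :: 'a \<Rightarrow> real. \<Sum>v\<in>V. f v * g v)"
  have ipos: "ip (ev mu) (ev mu) > 0" if muS: "mu \<in> S" for mu
  proof -
    obtain v where v: "v \<in> V" "ev mu v \<noteq> 0" using evP[OF muS] unfolding P_def by auto
    have "0 < ev mu v * ev mu v" using v(2) not_real_square_gt_zero by blast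
    also have "\<dots> \<le> ip (ev mu) (ev mu)" unfolding ip_def
      by (rule member_le_sum) (use v fin in auto)
    finally show ?thesis .
  qed
  have orth: "ip (ev mu1) (ev mu2) = 0" if "mu1 \<in> S" "mu2 \<in> S" "mu1 \<noteq> mu2" for mu1 mu2
  proof -
    have e1: "\<And>u. u\<in>V \<Longrightarrow> (\<Sum>w\<in>V. M u w * ev mu1 w) = mu1 * ev mu1 u"
      using evP[OF that(1)] unfolding P_def by auto
    have e2: "\<And>u. u\<in>V \<Longrightarrow> (\<Sum>w\<in>V. M u w * ev mu2 w) = mu2 * ev mu2 u"
      using evP[OF that(2)] unfolding P_def by auto
    have "(\<Sum>u\<in>V. ev mu1 u * (\<Sum>w\<in>V. M u w * ev mu2 w)) = (\<Sum>u\<in>V. ev mu2 u * (\<Sum>w\<in>V. M u w * ev mu1 w))"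
      by (rule sym_swap[OF fin sym])
    then have "(\<Sum>u\<in>V. ev mu1 u * (mu2 * ev mu2 u)) = (\<Sum>u\<in>V. ev mu2 u * (mu1 * ev mu1 u))"
      using e1 e2 by simp
    then have "mu2 * ip (ev mu1) (ev mu2) = mu1 * ip (ev mu1) (ev mu2)"
      unfolding ip_def by (simp add: sum_distrib_left mult_ac)
    then show ?thesis using that(3) by simp
  qed
  have evinj: "inj_on ev S"
  proof (rule inj_onI)
    fix a b assume ab: "a \<in> S" "b \<in> S" "ev a = ev b"
    show "a = b"
    proof (rule ccontr)
      assume "a \<noteq> b"
      then have "ip (ev a) (ev b) = 0" using orth ab by blast
      then show False using ipos[OF ab(1)] ab(3) by simp
    qed
  qed
  define sc where "sc = (\<lambda>(c::real) (f::'a \<Rightarrow> real). (\<lambda>v. c * f v))"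
  interpret fv: vector_space sc
    by unfold_locales (auto simp: sc_def fun_eq_iff algebra_simps)
  define D where "D = (\<lambda>v::'a. (\<lambda>w. if w = v then (1::real) else 0))"
  have span: "ev ` S \<subseteq> fv.span (D ` V)"
  proof
    fix f assume "f \<in> ev ` S"
    then obtain mu where f: "f = ev mu" by auto
    have "f = (\<Sum>v\<in>V. sc (f v) (D v))"
    proof
      fix w
      show "f w = (\<Sum>v\<in>V. sc (f v) (D v)) w"
        unfolding fun_sum_apply sc_def D_def
        using fin f ev0 by (cases "w \<in> V") (auto simp: if_distrib cong: if_cong)
    qed
    also have "\<dots> \<in> fv.span (D ` V)"
      by (intro fv.span_sum fv.span_scale fv.span_base) auto
    finally show "f \<in> fv.span (D ` V)" .
  qed
  have indep: "fv.independent (ev ` S)"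
    unfolding fv.independent_explicit_finite_subsets
  proof (intro allI impI ballI)
    fix T u g assume T: "T \<subseteq> ev ` S" "finite T" and s0: "(\<Sum>v\<in>T. sc (u v) v) = 0" and g: "g \<in> T"
    obtain mu where mu: "mu \<in> S" "g = ev mu" using T g by auto
    have "0 = (\<Sum>w\<in>V. (\<Sum>v\<in>T. sc (u v) v) w * g w)" using s0 by simp
    also have "\<dots> = (\<Sum>v\<in>T. u v * ip v g)"
      unfolding fun_sum_apply sc_def ip_def
      by (simp add: sum_distrib_left sum_distrib_right mult_ac sum.swap[of _ V])
    also have "\<dots> = u g * ip g g"
    proof (rule sum.remove[OF T(2) g, THEN trans])
      have "(\<Sum>v\<in>T - {g}. u v * ip v g) = 0"
      proof (intro sum.neutral ballI)
        fix v assume v: "v \<in> T - {g}"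
        then obtain nu where nu: "nu \<in> S" "v = ev nu" using T by auto
        have "nu \<noteq> mu" using v nu mu by auto
        then show "u v * ip v g = 0" using orth[OF nu(1) mu(1)] nu mu by simp
      qed
      then show "u g * ip g g + (\<Sum>v\<in>T - {g}. u v * ip v g) = u g * ip g g" by simp
    qed
    finally show "u g = 0" using ipos[OF mu(1)] mu(2) by simp
  qed
  have "finite (ev ` S)"
    using fv.independent_span_bound[OF _ indep span] fin by auto
  then show ?thesis using evinj finite_imageD unfolding S_def by blast
qed

lemma deg_pos:
  assumes sg: "simple_graph V E" and cg: "connected_graph V E" and c2: "card V \<ge> 2" and u: "u \<in> V"
  shows "Defs.degree V E u \<ge> 1"
proof -
  have fin: "finite V" using sg by (simp add: simple_graph_def)
  obtain v where v: "v \<in> V" "v \<noteq> u"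
  proof -
    have "\<not> V \<subseteq> {u}"
    proof
      assume "V \<subseteq> {u}"
      then have "card V \<le> card {u}" by (intro card_mono) auto
      then show False using c2 by simp
    qed
    then show ?thesis using that by blast
  qed
  have "E\<^sup>*\<^sup>* u v" using cg u v unfolding connected_graph_def by blast
  then obtain z where z: "E u z"
    using v(2) by (blast elim: converse_rtranclpE)
  then have "z \<in> {w \<in> V. E u w}" using sg unfolding simple_graph_def by blast
  moreover have "finite {w \<in> V. E u w}" using fin by simp
  ultimately have "card {w \<in> V. E u w} > 0" by (auto simp: card_gt_0_iff)
  then show ?thesis unfolding degree_def by simp
qed

lemma handshake:
  assumes sg: "simple_graph V E"
  shows "2 * num_edges E = (\<Sum>v\<in>V. Defs.degree V E v)"
proof -
  have fin: "finite V" and sym: "\<And>u v. E u v \<Longrightarrow> E v u" and irr: "\<And>u. \<not> E u u"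
    and inV: "\<And>u v. E u v \<Longrightarrow> u \<in> V \<and> v \<in> V"
    using sg by (auto simp: simple_graph_def)
  define P where "P = Sigma V (\<lambda>v. {w\<in>V. E v w})"
  define f where "f = (\<lambda>(u::'a,v). {u,v})"
  define Ed where "Ed = {{u, v} | u v. E u v}"
  have finP: "finite P" unfolding P_def using fin by auto
  have s1: "(\<Sum>v\<in>V. Defs.degree V E v) = card P"
    unfolding P_def degree_def using fin by (simp add: card_SigmaI)
  have img: "f ` P = Ed" unfolding f_def P_def Ed_def using inV by auto
  have finEd: "finite Ed" using img finP by blast
  have Pun: "P = (\<Union>e\<in>Ed. {p\<in>P. f p = e})" using img by auto
  have fib: "card {p\<in>P. f p = e} = 2" if eE: "e \<in> Ed" for e
  proof -
    obtain u v where e: "e = {u,v}" "E u v" using eE Ed_def by auto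
    have "{p\<in>P. f p = e} = {(u,v),(v,u)}"
      unfolding P_def f_def using e inV sym by (auto simp: doubleton_eq_iff)
    moreover have "u \<noteq> v" using e irr by auto
    ultimately show ?thesis by simp
  qed
  have "card P = (\<Sum>e\<in>Ed. card {p\<in>P. f p = e})"
    by (subst Pun, rule card_UN_disjoint) (use finEd finP in auto)
  also have "\<dots> = 2 * card Ed" using fib by simp
  finally show ?thesis using s1 unfolding num_edges_def Ed_def by simp
qed

lemma quad_expand:
  fixes M :: "'a \<Rightarrow> 'a \<Rightarrow> real"
  assumes fin: "finite V" and sym: "\<forall>u\<in>V. \<forall>w\<in>V. M u w = M w u"
  shows "(\<Sum>u\<in>V. \<Sum>w\<in>V. M u w * (x u + t * y u) * (x w + t * y w)) =
    (\<Sum>u\<in>V. \<Sum>w\<in>V. M u w * x u * x w) + 2 * t * (\<Sum>u\<in>V. y u * (\<Sum>w\<in>V. M u w * x w))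
     + t^2 * (\<Sum>u\<in>V. \<Sum>w\<in>V. M u w * y u * y w)"
proof -
  have pt: "M u w * (x u + t * y u) * (x w + t * y w) = M u w * x u * x w + t * (x u * (M u w * y w))
     + t * (y u * (M u w * x w)) + t^2 * (M u w * y u * y w)" for u w
    by (simp add: algebra_simps power2_eq_square)
  have "(\<Sum>u\<in>V. \<Sum>w\<in>V. M u w * (x u + t * y u) * (x w + t * y w)) =
     (\<Sum>u\<in>V. \<Sum>w\<in>V. M u w * x u * x w) + t * (\<Sum>u\<in>V. x u * (\<Sum>w\<in>V. M u w * y w))
     + t * (\<Sum>u\<in>V. y u * (\<Sum>w\<in>V. M u w * x w)) + t^2 * (\<Sum>u\<in>V. \<Sum>w\<in>V. M u w * y u * y w)"
    unfolding pt by (simp add: sum.distrib sum_distrib_left)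
  then show ?thesis using sym_swap[OF fin sym, of x y] by simp
qed

lemma eig_exists:
  fixes M :: "'a \<Rightarrow> 'a \<Rightarrow> real"
  assumes fin: "finite V" and ne: "V \<noteq> {}" and sym: "\<forall>u\<in>V. \<forall>w\<in>V. M u w = M w u"
  shows "\<exists>mu. is_eigenvalue V M mu"
proof -
  define Q where "Q = (\<lambda>x::'a\<Rightarrow>real. \<Sum>u\<in>V. \<Sum>w\<in>V. M u w * x u * x w)"
  define N where "N = (\<lambda>x::'a\<Rightarrow>real. \<Sum>u\<in>V. (x u)^2)"
  define S0 where "S0 = (\<lambda>i::'a. if i \<in> V then {-1..(1::real)} else {0})"
  define K where "K = PiE UNIV S0 \<inter> {x. N x = 1}"
  have cQ: "continuous_on UNIV Q" unfolding Q_def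
    by (intro continuous_intros continuous_on_product_coordinates)
  have cN: "continuous_on UNIV N" unfolding N_def
    by (intro continuous_intros continuous_on_product_coordinates)
  have "compactin (product_topology (\<lambda>i. euclidean) UNIV) (PiE UNIV S0)"
    unfolding compactin_PiE S0_def by auto
  then have "compact (PiE UNIV S0)"
    by (simp add: euclidean_product_topology)
  moreover have "closed {x. N x = 1}"
    by (rule closed_Collect_eq[OF cN]) simp
  ultimately have compK: "compact K" unfolding K_def by blast
  obtain v0 where v0: "v0 \<in> V" using ne by blast
  define d0 where "d0 = (\<lambda>w. if w = v0 then (1::real) else 0)"
  have "(\<lambda>u. (d0 u)^2) = d0" by (auto simp: d0_def)
  then have "N d0 = sum d0 V" unfolding N_def by metis
  also have "\<dots> = 1" unfolding d0_def using fin v0 by simp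
  finally have "N d0 = 1" .
  moreover have "d0 \<in> PiE UNIV S0" unfolding d0_def S0_def using v0 by auto
  ultimately have "K \<noteq> {}" unfolding K_def by blast
  then obtain x0 where x0K: "x0 \<in> K" and x0max: "\<forall>y\<in>K. Q y \<le> Q x0"
    using continuous_attains_sup[OF compK _ continuous_on_subset[OF cQ]] by blast
  define mu where "mu = Q x0"
  have Nx0: "N x0 = 1" using x0K unfolding K_def by auto
  have bound: "Q z \<le> mu * N z" for z
  proof (cases "N z = 0")
    case True
    then have "\<forall>u\<in>V. z u = 0" unfolding N_def using fin
      by (subst (asm) sum_nonneg_eq_0_iff) auto
    then have "Q z = 0" unfolding Q_def by simp
    then show ?thesis using True by simp
  next
    case False
    have Npos: "N z > 0" using False unfolding N_def
      by (metis (no_types, lifting) order_le_less sum_nonneg zero_le_power2)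
    define s where "s = sqrt (N z)"
    have spos: "s > 0" using Npos s_def by simp
    have s2: "s^2 = N z" using Npos s_def by simp
    define z' where "z' = (\<lambda>i. if i \<in> V then z i / s else 0)"
    have "z' \<in> PiE UNIV S0"
    proof -
      have "z i / s \<in> {-1..1}" if i: "i \<in> V" for i
      proof -
        have "(z i)^2 \<le> N z" unfolding N_def
          by (rule member_le_sum[where f="\<lambda>u. (z u)^2"]) (use i fin in auto)
        then have "\<bar>z i\<bar> \<le> s" unfolding s_def by (simp add: real_le_rsqrt)
        then show ?thesis using spos by (auto simp: abs_le_iff divide_le_eq le_divide_eq)
      qed
      then show ?thesis unfolding z'_def S0_def by auto
    qed
    moreover have "N z' = N z / s^2" unfolding N_def z'_def
      by (simp add: power_divide sum_divide_distrib)
    ultimately have "z' \<in> K" using s2 spos False unfolding K_def by simp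
    then have "Q z' \<le> mu" using x0max mu_def by blast
    moreover have "Q z' = Q z / s^2" unfolding Q_def z'_def
      by (simp add: sum_divide_distrib power2_eq_square mult.assoc)
    ultimately show ?thesis using s2 spos Npos by (simp add: divide_le_eq mult.commute)
  qed
  define r where "r = (\<lambda>u. (\<Sum>w\<in>V. M u w * x0 w) - mu * x0 u)"
  define G where "G = (\<Sum>u\<in>V. r u * (\<Sum>w\<in>V. M u w * x0 w)) - mu * (\<Sum>u\<in>V. x0 u * r u)"
  have G_eq: "G = (\<Sum>u\<in>V. (r u)^2)"
  proof -
    have "G = (\<Sum>u\<in>V. r u * ((\<Sum>w\<in>V. M u w * x0 w) - mu * x0 u))"
      unfolding G_def by (simp add: right_diff_distrib sum_subtractf sum_distrib_left mult_ac)
    also have "\<dots> = (\<Sum>u\<in>V. (r u)^2)" by (simp add: r_def power2_eq_square)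
    finally show ?thesis .
  qed
  define H where "H = Q r - mu * N r"
  have key: "2 * t * G + t^2 * H \<le> 0" for t
  proof -
    have "Q (\<lambda>u. x0 u + t * r u) \<le> mu * N (\<lambda>u. x0 u + t * r u)" by (rule bound)
    moreover have "Q (\<lambda>u. x0 u + t * r u) = Q x0 + 2 * t * (\<Sum>u\<in>V. r u * (\<Sum>w\<in>V. M u w * x0 w)) + t^2 * Q r"
      unfolding Q_def by (rule quad_expand[OF fin sym])
    moreover have "N (\<lambda>u. x0 u + t * r u) = N x0 + 2 * t * (\<Sum>u\<in>V. x0 u * r u) + t^2 * N r"
      unfolding N_def by (simp add: power2_eq_square algebra_simps sum.distrib sum_distrib_left)
    ultimately show ?thesis unfolding G_def H_def using Nx0 mu_def by (simp add: algebra_simps)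
  qed
  have G0: "G = 0"
  proof -
    define a where "a = 1 + \<bar>H\<bar>"
    have apos: "a > 0" unfolding a_def by simp
    define t where "t = G / a"
    have "2 * t * G + t^2 * H \<le> 0" by (rule key)
    moreover have "2 * t * G + t^2 * H = G^2 * (2 * a + H) / a^2"
      unfolding t_def using apos by (simp add: field_simps power2_eq_square)
    ultimately have "G^2 * (2 * a + H) / a^2 \<le> 0" by simp
    then have "G^2 * (2 * (1 + \<bar>H\<bar>) + H) \<le> 0"
      using apos unfolding a_def by (simp add: divide_le_0_iff)
    moreover have "2 * (1 + \<bar>H\<bar>) + H > 0" by (simp add: abs_if)
    ultimately have "G^2 \<le> 0" by (simp add: mult_le_0_iff)
    then show ?thesis by simp
  qed
  then have "\<forall>u\<in>V. r u = 0" using G_eq fin by (simp add: sum_nonneg_eq_0_iff)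
  then have eig: "\<forall>u\<in>V. (\<Sum>w\<in>V. M u w * x0 w) = mu * x0 u" unfolding r_def by simp
  have "\<exists>v\<in>V. x0 v \<noteq> 0"
  proof (rule ccontr)
    assume "\<not> ?thesis"
    then have "N x0 = 0" unfolding N_def by simp
    then show False using Nx0 by simp
  qed
  then show ?thesis using eig unfolding is_eigenvalue_def by blast
qed

lemma count_sum:
  fixes g :: real and V :: "'a set"
  assumes fin: "finite V"
  shows "(\<Sum>u\<in>V. if P u then g else 0) = real (card {u\<in>V. P u}) * g"
proof -
  have "(\<Sum>u\<in>V. if P u then g else 0) = (\<Sum>u\<in>{u\<in>V. P u}. g)"
    using fin by (rule sum.inter_filter[symmetric])
  then show ?thesis by simp
qed

lemma amgm_bound:
  fixes M :: "'a \<Rightarrow> 'a \<Rightarrow> real" and d :: "'a \<Rightarrow> real" and x :: "'a \<Rightarrow> real"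
  assumes fin: "finite V"
    and Mz: "\<And>u w. \<not> E u w \<Longrightarrow> M u w = 0"
    and Mnn: "\<And>u w. M u w \<ge> 0"
    and dpos: "\<And>u. u \<in> V \<Longrightarrow> d u > 0"
    and dcnt: "\<And>w. w \<in> V \<Longrightarrow> real (card {u\<in>V. E u w}) = d w"
    and cC: "\<And>u. u \<in> V \<Longrightarrow> (\<Sum>w\<in>V. if E u w then (M u w)^2 * d w else 0) \<le> C"
    and C0: "C \<ge> 0"
    and xnz: "\<exists>v\<in>V. x v \<noteq> 0"
    and eig: "\<forall>u\<in>V. (\<Sum>w\<in>V. M u w * x w) = mu * x u"
  shows "mu \<le> sqrt C"
proof -
  define S where "S = (\<Sum>u\<in>V. (x u)^2)"
  have Spos: "S > 0"
  proof -
    obtain v where v: "v \<in> V" "x v \<noteq> 0" using xnz by blast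
    have "0 < (x v)^2" using v by simp
    also have "\<dots> \<le> S" unfolding S_def by (rule member_le_sum) (use v fin in auto)
    finally show ?thesis .
  qed
  define A where "A = (\<Sum>u\<in>V. \<Sum>w\<in>V. M u w * \<bar>x u\<bar> * \<bar>x w\<bar>)"
  have muS: "mu * S \<le> A"
  proof -
    have "mu * S = (\<Sum>u\<in>V. x u * (mu * x u))"
      unfolding S_def by (simp add: sum_distrib_left power2_eq_square mult_ac)
    also have "\<dots> = (\<Sum>u\<in>V. x u * (\<Sum>w\<in>V. M u w * x w))"
      using eig by (intro sum.cong) auto
    also have "\<dots> = (\<Sum>u\<in>V. \<Sum>w\<in>V. x u * M u w * x w)"
      by (simp add: sum_distrib_left mult.assoc)
    also have "\<dots> \<le> A" unfolding A_def
    proof (intro sum_mono)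
      fix u w
      have "x u * M u w * x w \<le> \<bar>x u * M u w * x w\<bar>" by simp
      also have "\<dots> = M u w * \<bar>x u\<bar> * \<bar>x w\<bar>" using Mnn[of u w] by (simp add: abs_mult)
      finally show "x u * M u w * x w \<le> M u w * \<bar>x u\<bar> * \<bar>x w\<bar>" .
    qed
    finally show ?thesis .
  qed
  have lam: "mu \<le> C / (2 * l) + l / 2" if lpos: "l > 0" for l
  proof -
    define g where "g = (\<lambda>w. (x w)^2 / d w)"
    have trm: "M u w * \<bar>x u\<bar> * \<bar>x w\<bar> \<le>
        (if E u w then (M u w)^2 * d w * (x u)^2 / (2 * l) else 0) + l / 2 * (if E u w then g w else 0)"
      if u: "u \<in> V" and w: "w \<in> V" for u w
    proof (cases "E u w")
      case False
      then show ?thesis using Mz by simp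
    next
      case True
      have dw: "d w > 0" using dpos w by simp
      have sq: "0 \<le> (M u w * \<bar>x u\<bar> * d w - l * \<bar>x w\<bar>)^2" by simp
      have "2 * l * d w * (M u w * \<bar>x u\<bar> * \<bar>x w\<bar>) \<le> (M u w)^2 * (x u)^2 * (d w)^2 + l^2 * (x w)^2"
        using sq by (simp add: power2_eq_square algebra_simps)
      then have "M u w * \<bar>x u\<bar> * \<bar>x w\<bar> \<le> ((M u w)^2 * (x u)^2 * (d w)^2 + l^2 * (x w)^2) / (2 * l * d w)"
        using dw lpos by (simp add: le_divide_eq mult_ac)
      also have "\<dots> = (M u w)^2 * d w * (x u)^2 / (2 * l) + l / 2 * g w"
        unfolding g_def using dw lpos by (simp add: field_simps power2_eq_square)
      finally show ?thesis using True by simp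
    qed
    define T1 where "T1 = (\<Sum>u\<in>V. \<Sum>w\<in>V. (if E u w then (M u w)^2 * d w * (x u)^2 / (2 * l) else 0))"
    define T2 where "T2 = (\<Sum>u\<in>V. \<Sum>w\<in>V. l / 2 * (if E u w then g w else 0))"
    have "A \<le> (\<Sum>u\<in>V. \<Sum>w\<in>V. (if E u w then (M u w)^2 * d w * (x u)^2 / (2 * l) else 0) + l / 2 * (if E u w then g w else 0))"
      unfolding A_def by (intro sum_mono trm)
    also have "\<dots> = T1 + T2" unfolding T1_def T2_def by (simp only: sum.distrib)
    finally have AT: "A \<le> T1 + T2" .
    have T1eq: "T1 = (\<Sum>u\<in>V. (x u)^2 / (2 * l) * (\<Sum>w\<in>V. if E u w then (M u w)^2 * d w else 0))"
      unfolding T1_def by (auto simp: sum_distrib_left intro!: sum.cong)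
    have T2eq: "T2 = l / 2 * (\<Sum>u\<in>V. \<Sum>w\<in>V. if E u w then g w else 0)"
      unfolding T2_def by (simp add: sum_distrib_left)
    have cnt: "(\<Sum>u\<in>V. \<Sum>w\<in>V. if E u w then g w else 0) = S"
    proof -
      have "(\<Sum>u\<in>V. \<Sum>w\<in>V. if E u w then g w else 0) = (\<Sum>w\<in>V. \<Sum>u\<in>V. if E u w then g w else 0)"
        by (rule sum.swap)
      also have "\<dots> = (\<Sum>w\<in>V. real (card {u\<in>V. E u w}) * g w)"
        using fin by (simp add: count_sum)
      also have "\<dots> = (\<Sum>w\<in>V. (x w)^2)"
        using dcnt dpos unfolding g_def by (intro sum.cong) (auto simp: field_simps dest: dpos)
      finally show ?thesis unfolding S_def .
    qed
    have "T1 \<le> (\<Sum>u\<in>V. (x u)^2 / (2 * l) * C)"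
      unfolding T1eq using lpos cC by (intro sum_mono mult_left_mono) auto
    also have "(\<Sum>u\<in>V. (x u)^2 / (2 * l) * C) = C / (2 * l) * S"
      unfolding S_def by (simp add: sum_distrib_left sum_distrib_right sum_divide_distrib mult_ac)
    finally have "T1 \<le> C / (2 * l) * S" .
    then have "mu * S \<le> (C / (2 * l) + l / 2) * S" using muS AT T2eq cnt by (simp add: algebra_simps)
    then show ?thesis using Spos by simp
  qed
  show ?thesis
  proof (cases "C > 0")
    case True
    have "mu \<le> C / (2 * sqrt C) + sqrt C / 2" using lam True by simp
    also have "\<dots> = sqrt C"
      using True by (simp add: field_simps real_sqrt_mult[symmetric] flip: power2_eq_square)
    finally show ?thesis .
  next
    case False
    then have "C = 0" using C0 by simp
    show ?thesis
    proof (rule ccontr)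
      assume "\<not> mu \<le> sqrt C"
      then have "mu > 0" using \<open>C = 0\<close> by simp
      then have "mu \<le> C / (2 * mu) + mu / 2" using lam by simp
      then show False using \<open>C = 0\<close> \<open>mu > 0\<close> by simp
    qed
  qed
qed

lemma t_le:
  assumes sg: "simple_graph V E" and cg: "connected_graph V E" and c2: "card V \<ge> 2" and u: "u \<in> V"
  shows "(\<Sum>w\<in>{w\<in>V. E u w}. Defs.degree V E w) + card V \<le> 2 * num_edges E + 1"
proof -
  have fin: "finite V" and irr: "\<And>u. \<not> E u u" using sg by (auto simp: simple_graph_def)
  define N where "N = {w\<in>V. E u w}"
  define R where "R = {w\<in>V. w \<noteq> u \<and> \<not> E u w}"
  have Vd: "V = insert u (N \<union> R)" unfolding N_def R_def using u by auto
  have uN: "u \<notin> N \<union> R" unfolding N_def R_def using irr by auto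
  have disj: "N \<inter> R = {}" unfolding N_def R_def by auto
  have finN: "finite N" and finR: "finite R" unfolding N_def R_def using fin by auto
  let ?d = "Defs.degree V E"
  have "(\<Sum>v\<in>V. ?d v) = ?d u + (\<Sum>v\<in>N. ?d v) + (\<Sum>v\<in>R. ?d v)"
    by (subst Vd, subst sum.insert) (use finN finR uN disj in \<open>auto simp: sum.union_disjoint\<close>)
  moreover have "card V = 1 + card N + card R"
    by (subst Vd, subst card.insert) (use finN finR uN disj in \<open>auto simp: card_Un_disjoint\<close>)
  moreover have "card N = ?d u" unfolding N_def degree_def by simp
  moreover have "card R \<le> (\<Sum>v\<in>R. ?d v)"
  proof -
    have "card R = (\<Sum>v\<in>R. 1)" by simp
    also have "\<dots> \<le> (\<Sum>v\<in>R. ?d v)"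
      by (intro sum_mono deg_pos[OF sg cg c2]) (auto simp: R_def)
    finally show ?thesis .
  qed
  moreover have "2 * num_edges E = (\<Sum>v\<in>V. ?d v)" by (rule handshake[OF sg])
  ultimately show ?thesis unfolding N_def by linarith
qed

lemma deg_le_max:
  assumes sg: "simple_graph V E" and u: "u \<in> V"
  shows "Defs.degree V E u \<le> max_degree V E"
  using sg u unfolding max_degree_def simple_graph_def by (intro Max_ge) auto

lemma key_ineq:
  fixes d t P D :: real
  assumes "1 \<le> d" "d \<le> D" "0 \<le> t" "t \<le> P" "t \<le> d * D"
  shows "d + t / d \<le> D + P / D"
proof -
  have Dp: "D > 0" "d > 0" using assms by auto
  have "d * d * D + t * D \<le> d * D * D + P * d"
  proof (cases "d * D \<le> P")
    case True
    have "t * D \<le> d * D * D" using assms Dp by (simp add: mult_right_mono)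
    moreover have "d * d * D \<le> P * d" using True Dp by (simp add: mult_right_mono mult.commute mult.left_commute)
    ultimately show ?thesis by linarith
  next
    case False
    have "t * D \<le> P * D" using assms Dp by (simp add: mult_right_mono)
    moreover have "P * (D - d) \<le> d * D * (D - d)" using False assms by (intro mult_right_mono) auto
    ultimately show ?thesis by (simp add: algebra_simps)
  qed
  then show ?thesis using Dp by (simp add: field_simps)
qed

theorem corollary2p3:
  fixes V :: "'a set" and E :: "'a \<Rightarrow> 'a \<Rightarrow> bool"
  assumes "simple_graph V E" and "connected_graph V E" and "card V \<ge> 2"
  defines "n \<equiv> card V" and "m \<equiv> num_edges E" and "\<Delta> \<equiv> max_degree V E"
  defines "k \<equiv> \<lceil>(2 * real m - real n + 1) / real \<Delta>\<rceil>"
  shows "abc_spectral_radius V E \<le> sqrt (real \<Delta> + real_of_int k - 2)"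
proof -
  note sg = assms(1) and cg = assms(2) and c2 = assms(3)
  have fin: "finite V" and symE: "\<And>u v. E u v \<Longrightarrow> E v u" and irr: "\<And>u. \<not> E u u"
    and inV: "\<And>u v. E u v \<Longrightarrow> u \<in> V \<and> v \<in> V"
    using sg by (auto simp: simple_graph_def)
  have ne: "V \<noteq> {}" using c2 by auto
  define d where "d = (\<lambda>u. real (Defs.degree V E u))"
  define D where "D = real \<Delta>"
  define P where "P = 2 * real m - real n + 1"
  let ?M = "abc_matrix V E"
  have dpos: "d u \<ge> 1" if "u \<in> V" for u
    unfolding d_def using deg_pos[OF sg cg c2 that] by simp
  have dleD: "d u \<le> D" if "u \<in> V" for u
    unfolding d_def D_def \<Delta>_def using deg_le_max[OF sg that] by simp
  obtain v0 where v0: "v0 \<in> V" using ne by blast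
  have D1: "D \<ge> 1" using dpos[OF v0] dleD[OF v0] by simp
  have Msym: "\<forall>u\<in>V. \<forall>w\<in>V. ?M u w = ?M w u"
    unfolding abc_matrix_def using symE by (auto simp: add.commute mult.commute)
  have Mval: "?M u w = sqrt ((d u + d w - 2) / (d u * d w))" if "E u w" for u w
    using that unfolding abc_matrix_def d_def by simp
  have M2: "(?M u w)^2 = (d u + d w - 2) / (d u * d w)" if "E u w" for u w
  proof -
    have "d u \<ge> 1" "d w \<ge> 1" using dpos inV[OF that] by auto
    then have "(d u + d w - 2) / (d u * d w) \<ge> 0" by simp
    then show ?thesis using Mval[OF that] by simp
  qed
  have Mnn: "?M u w \<ge> 0" for u w
  proof (cases "E u w")
    case True
    have "d u \<ge> 1" "d w \<ge> 1" using dpos inV[OF True] by auto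
    then show ?thesis using Mval[OF True] by simp
  next
    case False then show ?thesis unfolding abc_matrix_def by simp
  qed
  define C where "C = D + P / D - 2"
  have cC: "(\<Sum>w\<in>V. if E u w then (?M u w)^2 * d w else 0) \<le> C" if u: "u \<in> V" for u
  proof -
    define Nu where "Nu = {w\<in>V. E u w}"
    define t where "t = (\<Sum>w\<in>Nu. d w)"
    have cardN: "real (card Nu) = d u" unfolding Nu_def d_def degree_def by simp
    have "(\<Sum>w\<in>V. if E u w then (?M u w)^2 * d w else 0) = (\<Sum>w\<in>Nu. (?M u w)^2 * d w)"
      unfolding Nu_def using fin by (simp add: sum.inter_filter)
    also have "\<dots> = (\<Sum>w\<in>Nu. (d u - 2) / d u + d w / d u)"
    proof (intro sum.cong refl)
      fix w assume "w \<in> Nu"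
      then have Euw: "E u w" and w: "w \<in> V" unfolding Nu_def by auto
      have "d w \<ge> 1" "d u \<ge> 1" using dpos w u by auto
      then show "(?M u w)^2 * d w = (d u - 2) / d u + d w / d u"
        unfolding M2[OF Euw] by (simp add: field_simps)
    qed
    also have "\<dots> = d u * ((d u - 2) / d u) + t / d u"
      unfolding t_def by (simp add: sum.distrib cardN sum_divide_distrib)
    also have "\<dots> = d u + t / d u - 2" using dpos[OF u] by (simp add: field_simps)
    also have "\<dots> \<le> C"
    proof -
      have "t \<le> P"
      proof -
        have "(\<Sum>w\<in>Nu. Defs.degree V E w) + card V \<le> 2 * num_edges E + 1"
          unfolding Nu_def by (rule t_le[OF sg cg c2 u])
        then have "real ((\<Sum>w\<in>Nu. Defs.degree V E w) + card V) \<le> real (2 * num_edges E + 1)"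
          by (simp only: of_nat_le_iff)
        then show ?thesis unfolding t_def P_def d_def m_def n_def by simp
      qed
      moreover have "t \<le> d u * D"
      proof -
        have "t \<le> (\<Sum>w\<in>Nu. D)" unfolding t_def using dleD by (intro sum_mono) (auto simp: Nu_def)
        then show ?thesis using cardN by (simp add: mult.commute)
      qed
      moreover have "t \<ge> 0" unfolding t_def d_def by (simp add: sum_nonneg)
      ultimately have "d u + t / d u \<le> D + P / D"
        using key_ineq dpos[OF u] dleD[OF u] by blast
      then show ?thesis unfolding C_def by simp
    qed
    finally show ?thesis .
  qed
  have C0: "C \<ge> 0"
  proof -
    have "0 \<le> (\<Sum>w\<in>V. if E v0 w then (?M v0 w)^2 * d w else 0)"
    proof (intro sum_nonneg)
      fix w assume "w \<in> V"
      then have "d w \<ge> 0" using dpos by (meson order_trans zero_le_one)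
      then show "0 \<le> (if E v0 w then (?M v0 w)^2 * d w else 0)" by simp
    qed
    then show ?thesis using cC[OF v0] by simp
  qed
  define S where "S = {mu. is_eigenvalue V ?M mu}"
  have finS: "finite S" unfolding S_def by (rule eig_finite[OF fin Msym])
  have neS: "S \<noteq> {}" unfolding S_def using eig_exists[OF fin ne Msym] by auto
  have "Max S \<in> S" using finS neS by (rule Max_in)
  then obtain x where xnz: "\<exists>v\<in>V. x v \<noteq> 0" and eig: "\<forall>u\<in>V. (\<Sum>w\<in>V. ?M u w * x w) = Max S * x u"
    unfolding S_def is_eigenvalue_def by auto
  have dcnt: "real (card {u\<in>V. E u w}) = d w" if "w \<in> V" for w
  proof -
    have "{u\<in>V. E u w} = {u\<in>V. E w u}" using symE by blast
    then show ?thesis unfolding d_def degree_def by simp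
  qed
  have Mz: "\<And>u w. \<not> E u w \<Longrightarrow> ?M u w = 0" unfolding abc_matrix_def by simp
  have dpos': "\<And>u. u \<in> V \<Longrightarrow> d u > 0" using dpos by (meson less_le_trans zero_less_one)
  have "Max S \<le> sqrt C"
    by (rule amgm_bound[where E = E and d = d, OF fin Mz Mnn dpos' dcnt cC C0 xnz eig])
  also have "sqrt C \<le> sqrt (real \<Delta> + real_of_int k - 2)"
  proof -
    have "P / D \<le> real_of_int k" unfolding k_def P_def D_def by simp
    then show ?thesis unfolding C_def D_def by simp
  qed
  finally show ?thesis unfolding abc_spectral_radius_def S_def .
qed

end
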